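(* Let $a_n=\left|\Pi_n\wr C_2(1^11^1,1^11^2)\right|$. Then for $n\ge3$, $a_n=2a_{n-1}+(n-1)a_{n-2}$.
   Context: For $n\ge0$ let $[n]=\{1,\dots,n\}$. A $2$-colored set partition of $[n]$ is a set partition of $[n]$ together with an assignment of a color from $\{1,2\}$ to each element; $\Pi_n\wr C_2$ is the set of these. For a set $S$ of patterns, $\Pi_n\wr C_2(S)$ is the set of such colored partitions avoiding every pattern in $S$ in the pattern sense. For the patterns used here: $\sigma$ contains $1^11^1$ iff two elements in the same block have the same color; $\sigma$ contains $1^11^2$ iff there are $i<j$ in the same block with $i$ colored $1$ and $j$ colored $2$. *)

theory Defs
  imports "HOL-Library.Disjoint_Sets" "HOL-Library.FuncSet"
begin

definition colored_partitions :: "nat \<Rightarrow> (nat set set \<times> (nat \<Rightarrow> nat)) set" where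
  "colored_partitions n =
     {(P, c). partition_on {1..n} P \<and> c \<in> {1..n} \<rightarrow>\<^sub>E {1, 2}}"

definition contains_11_11 :: "nat set set \<times> (nat \<Rightarrow> nat) \<Rightarrow> bool" where
  "contains_11_11 \<sigma> = (\<exists>B\<in>fst \<sigma>. \<exists>i\<in>B. \<exists>j\<in>B. i \<noteq> j \<and> snd \<sigma> i = snd \<sigma> j)"

definition contains_11_12 :: "nat set set \<times> (nat \<Rightarrow> nat) \<Rightarrow> bool" where
  "contains_11_12 \<sigma> = (\<exists>B\<in>fst \<sigma>. \<exists>i\<in>B. \<exists>j\<in>B. i < j \<and> snd \<sigma> i = 1 \<and> snd \<sigma> j = 2)"

definition avoiding_count :: "nat \<Rightarrow> nat" where
  "avoiding_count n = card {\<sigma> \<in> colored_partitions n. \<not> contains_11_11 \<sigma> \<and> \<not> contains_11_12 \<sigma>}"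

end

theory Submission
  imports Defs
begin

lemma part_remove:
  assumes "partition_on A P" "p \<in> P"
  shows "partition_on (A - p) (P - {p})"
proof -
  have d: "disjnt p (\<Union>(P - {p}))"
    using assms by (auto simp: partition_on_def disjoint_def disjnt_def)
  have "insert p (P - {p}) = P" using assms(2) by auto
  then show ?thesis using partition_on_insert[OF d, of A] assms(1) by simp
qed

lemma part_add:
  assumes "partition_on A Q" "p \<inter> A = {}" "p \<noteq> {}"
  shows "partition_on (A \<union> p) (insert p Q)"
proof -
  have d: "disjnt p (\<Union>Q)" using assms partition_onD1[OF assms(1)] by (auto simp: disjnt_def)
  have "A \<union> p - p = A" using assms(2) by auto
  then show ?thesis using partition_on_insert[OF d, of "A \<union> p"] assms by auto
qed

definition SA :: "nat set \<Rightarrow> (nat set set \<times> (nat \<Rightarrow> nat)) set" where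
  "SA A = {(P,c). partition_on A P \<and> c \<in> A \<rightarrow>\<^sub>E {1,2} \<and> \<not> contains_11_11 (P,c) \<and> \<not> contains_11_12 (P,c)}"

lemma SA_finite: "finite A \<Longrightarrow> finite (SA A)"
proof -
  assume f: "finite A"
  have "SA A \<subseteq> Pow (Pow A) \<times> (A \<rightarrow>\<^sub>E {1,2})"
    by (auto simp: SA_def partition_on_def)
  moreover have "finite (Pow (Pow A) \<times> (A \<rightarrow>\<^sub>E ({1,2}::nat set)))"
    using f by (intro finite_cartesian_product finite_PiE) auto
  ultimately show ?thesis by (rule finite_subset)
qed

lemma block_small:
  assumes "(P,c) \<in> SA A" "B \<in> P" "m \<in> B"
  shows "B = {m} \<or> (\<exists>k. k \<noteq> m \<and> B = {k,m} \<and> c k \<noteq> c m)"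
proof -
  have BA: "B \<subseteq> A" using assms by (auto simp: SA_def partition_on_def)
  have c: "\<And>x. x \<in> A \<Longrightarrow> c x = 1 \<or> c x = 2" using assms(1) by (auto simp: SA_def)
  have ne: "\<And>i j. i \<in> B \<Longrightarrow> j \<in> B \<Longrightarrow> i \<noteq> j \<Longrightarrow> c i \<noteq> c j"
    using assms(1,2) by (auto simp: SA_def contains_11_11_def)
  show ?thesis
  proof (cases "B = {m}")
    case False
    then obtain k where k: "k \<in> B" "k \<noteq> m" using assms(3) by auto
    have "B = {k,m}"
    proof
      show "B \<subseteq> {k,m}"
      proof
        fix x assume x: "x \<in> B"
        show "x \<in> {k,m}"
        proof (rule ccontr)
          assume "x \<notin> {k,m}"
          then have h: "c x \<noteq> c k" "c x \<noteq> c m" "c k \<noteq> c m"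
            using ne[OF x k(1)] ne[OF x assms(3)] ne[OF k(1) assms(3) k(2)] by auto
          have "x \<in> A" "k \<in> A" "m \<in> A" using BA x k assms(3) by auto
          then have "c x = 1 \<or> c x = 2" "c k = 1 \<or> c k = 2" "c m = 1 \<or> c m = 2" using c by auto
          then show False using h by auto
        qed
      qed
    qed (use k assms(3) in auto)
    then show ?thesis using k ne[OF k(1) assms(3) k(2)] by auto
  qed simp
qed

lemma c11_insert: "contains_11_11 (insert B Q, c) \<longleftrightarrow> (\<exists>i\<in>B. \<exists>j\<in>B. i \<noteq> j \<and> c i = c j) \<or> contains_11_11 (Q,c)"
  by (auto simp: contains_11_11_def)
lemma c12_insert: "contains_11_12 (insert B Q, c) \<longleftrightarrow> (\<exists>i\<in>B. \<exists>j\<in>B. i < j \<and> c i = 1 \<and> c j = 2) \<or> contains_11_12 (Q,c)"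
  by (auto simp: contains_11_12_def)
lemma c11_cong: "(\<And>x. x \<in> \<Union>P \<Longrightarrow> c x = c' x) \<Longrightarrow> contains_11_11 (P,c) = contains_11_11 (P,c')"
proof -
  assume h: "\<And>x. x \<in> \<Union>P \<Longrightarrow> c x = c' x"
  have "\<And>B i j. B \<in> P \<Longrightarrow> i \<in> B \<Longrightarrow> j \<in> B \<Longrightarrow> c i = c' i \<and> c j = c' j"
    using h by blast
  then show ?thesis unfolding contains_11_11_def by force
qed
lemma c12_cong: "(\<And>x. x \<in> \<Union>P \<Longrightarrow> c x = c' x) \<Longrightarrow> contains_11_12 (P,c) = contains_11_12 (P,c')"
proof -
  assume h: "\<And>x. x \<in> \<Union>P \<Longrightarrow> c x = c' x"
  have "\<And>B i j. B \<in> P \<Longrightarrow> i \<in> B \<Longrightarrow> j \<in> B \<Longrightarrow> c i = c' i \<and> c j = c' j"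
    using h by blast
  then show ?thesis unfolding contains_11_12_def by force
qed
lemma c11_mono: "Q \<subseteq> P \<Longrightarrow> contains_11_11 (Q,c) \<Longrightarrow> contains_11_11 (P,c)"
  unfolding contains_11_11_def by auto
lemma c12_mono: "Q \<subseteq> P \<Longrightarrow> contains_11_12 (Q,c) \<Longrightarrow> contains_11_12 (P,c)"
  unfolding contains_11_12_def by auto

lemma SA_add1:
  assumes "(Q,d) \<in> SA A" "m \<notin> A" "x \<in> {1,2}"
  shows "(insert {m} Q, d(m:=x)) \<in> SA (insert m A)"
proof -
  have pQ: "partition_on A Q" and dP: "d \<in> A \<rightarrow>\<^sub>E {1,2}" and n1: "\<not> contains_11_11 (Q,d)"
    and n2: "\<not> contains_11_12 (Q,d)" using assms(1) by (auto simp: SA_def)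
  have UQ: "\<Union>Q = A" using pQ by (simp add: partition_on_def)
  have p: "partition_on (insert m A) (insert {m} Q)"
    using part_add[OF pQ, of "{m}"] assms(2) by auto
  have eq: "\<And>y. y \<in> \<Union>Q \<Longrightarrow> (d(m:=x)) y = d y" using UQ assms(2) by auto
  have "\<not> contains_11_11 (Q, d(m:=x))" using c11_cong[of Q "d(m:=x)" d, OF eq] n1 by simp
  moreover have "\<not> contains_11_12 (Q, d(m:=x))" using c12_cong[of Q "d(m:=x)" d, OF eq] n2 by simp
  moreover have "d(m:=x) \<in> insert m A \<rightarrow>\<^sub>E {1,2}" using dP assms(3) by (auto simp: PiE_def extensional_def Pi_def)
  ultimately show ?thesis using p by (auto simp: SA_def c11_insert c12_insert)
qed

lemma SA_add2:
  assumes "(Q,d) \<in> SA A" "k \<notin> A" "m \<notin> A" "k < m"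
  shows "(insert {k,m} Q, d(k:=2, m:=1)) \<in> SA (insert k (insert m A))"
proof -
  have pQ: "partition_on A Q" and dP: "d \<in> A \<rightarrow>\<^sub>E {1,2}" and n1: "\<not> contains_11_11 (Q,d)"
    and n2: "\<not> contains_11_12 (Q,d)" using assms(1) by (auto simp: SA_def)
  have UQ: "\<Union>Q = A" using pQ by (simp add: partition_on_def)
  have p: "partition_on (A \<union> {k,m}) (insert {k,m} Q)"
    using part_add[OF pQ, of "{k,m}"] assms(2,3) by auto
  have eq: "\<And>y. y \<in> \<Union>Q \<Longrightarrow> (d(k:=2, m:=1)) y = d y" using UQ assms(2,3) by auto
  have "\<not> contains_11_11 (Q, d(k:=2, m:=1))" using c11_cong[of Q "d(k:=2, m:=1)" d, OF eq] n1 by simp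
  moreover have "\<not> contains_11_12 (Q, d(k:=2, m:=1))" using c12_cong[of Q "d(k:=2, m:=1)" d, OF eq] n2 by simp
  moreover have "d(k:=2, m:=1) \<in> insert k (insert m A) \<rightarrow>\<^sub>E {1,2}" using dP by (auto simp: PiE_def extensional_def Pi_def)
  moreover have "A \<union> {k,m} = insert k (insert m A)" by auto
  ultimately show ?thesis using p assms(4) by (auto simp: SA_def c11_insert c12_insert)
qed

lemma SA_rem:
  assumes "(P,c) \<in> SA A" "B \<in> P"
  shows "(P - {B}, \<lambda>x. if x \<in> B then undefined else c x) \<in> SA (A - B)"
proof -
  have pP: "partition_on A P" and cP: "c \<in> A \<rightarrow>\<^sub>E {1,2}" and n1: "\<not> contains_11_11 (P,c)"
    and n2: "\<not> contains_11_12 (P,c)" using assms(1) by (auto simp: SA_def)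
  have pQ: "partition_on (A - B) (P - {B})" by (rule part_remove[OF pP assms(2)])
  have UQ: "\<Union>(P - {B}) = A - B" using pQ by (simp add: partition_on_def)
  have eq: "\<And>y. y \<in> \<Union>(P - {B}) \<Longrightarrow> (\<lambda>x. if x \<in> B then undefined else c x) y = c y" using UQ by auto
  have "\<not> contains_11_11 (P - {B}, c)" using n1 c11_mono[of "P - {B}" P c] by auto
  then have "\<not> contains_11_11 (P - {B}, \<lambda>x. if x \<in> B then undefined else c x)" using c11_cong[of "P - {B}" "\<lambda>x. if x \<in> B then undefined else c x" c, OF eq] by simp
  moreover have "\<not> contains_11_12 (P - {B}, c)" using n2 c12_mono[of "P - {B}" P c] by auto
  then have "\<not> contains_11_12 (P - {B}, \<lambda>x. if x \<in> B then undefined else c x)" using c12_cong[of "P - {B}" "\<lambda>x. if x \<in> B then undefined else c x" c, OF eq] by simp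
  moreover have "(\<lambda>x. if x \<in> B then undefined else c x) \<in> A - B \<rightarrow>\<^sub>E {1,2}" using cP by (auto simp: PiE_def extensional_def Pi_def)
  ultimately show ?thesis using pQ by (auto simp: SA_def)
qed

lemma decomp:
  assumes fin: "finite A" and ne: "A \<noteq> {}"
  defines "m \<equiv> Max A"
  shows "card (SA A) = 2 * card (SA (A - {m})) + (\<Sum>k\<in>A - {m}. card (SA (A - {m} - {k})))"
proof -
  define A' where "A' = A - {m}"
  have mA: "m \<in> A" using fin ne by (simp add: m_def)
  have kless: "\<And>k. k \<in> A' \<Longrightarrow> k < m" using fin unfolding A'_def m_def
    by (metis DiffE Max_ge insertI1 le_neq_implies_less)
  have AA: "A = insert m A'" using mA by (auto simp: A'_def)
  have mA': "m \<notin> A'" by (simp add: A'_def)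
  define S1 where "S1 = {\<sigma> \<in> SA A. {m} \<in> fst \<sigma>}"
  define T where "T k = {\<sigma> \<in> SA A. {k,m} \<in> fst \<sigma>}" for k
  define f1 where "f1 = (\<lambda>((Q::nat set set, d::nat\<Rightarrow>nat), x::nat). (insert {m} Q, d(m:=x)))"
  define f2 where "f2 k = (\<lambda>(Q::nat set set, d::nat\<Rightarrow>nat). (insert {k,m} Q, d(k:=2, m:=1)))" for k
  have cover: "SA A = S1 \<union> (\<Union>k\<in>A'. T k)"
  proof
    show "SA A \<subseteq> S1 \<union> (\<Union>k\<in>A'. T k)"
    proof
      fix \<sigma> assume s: "\<sigma> \<in> SA A"
      obtain P c where \<sigma>: "\<sigma> = (P,c)" by force
      have "\<Union>P = A" using s \<sigma> by (auto simp: SA_def partition_on_def)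
      then obtain B where B: "B \<in> P" "m \<in> B" using mA by auto
      from block_small[OF s[unfolded \<sigma>] B]
      show "\<sigma> \<in> S1 \<union> (\<Union>k\<in>A'. T k)"
      proof
        assume "B = {m}" then show ?thesis using B s \<sigma> by (auto simp: S1_def)
      next
        assume "\<exists>k. k \<noteq> m \<and> B = {k, m} \<and> c k \<noteq> c m"
        then obtain k where k: "k \<noteq> m" "B = {k,m}" by blast
        have "B \<subseteq> A" using s \<sigma> B by (auto simp: SA_def partition_on_def)
        then have "k \<in> A'" using k by (auto simp: A'_def)
        then show ?thesis using B k s \<sigma> by (auto simp: T_def)
      qed
    qed
  qed (auto simp: S1_def T_def)
  have blocks_eq: "\<And>P c B B'. (P,c) \<in> SA A \<Longrightarrow> B \<in> P \<Longrightarrow> B' \<in> P \<Longrightarrow> m \<in> B \<Longrightarrow> m \<in> B' \<Longrightarrow> B = B'"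
    by (auto simp: SA_def partition_on_def disjoint_def)
  have d1: "S1 \<inter> (\<Union>k\<in>A'. T k) = {}"
  proof (rule ccontr)
    assume "S1 \<inter> (\<Union>k\<in>A'. T k) \<noteq> {}"
    then obtain P c k where "(P,c) \<in> SA A" "{m} \<in> P" "{k,m} \<in> P" "k \<in> A'"
      by (auto simp: S1_def T_def)
    then have "{m} = {k,m}" using blocks_eq by blast
    then show False using \<open>k \<in> A'\<close> mA' by auto
  qed
  have d2: "\<forall>k\<in>A'. \<forall>k'\<in>A'. k \<noteq> k' \<longrightarrow> T k \<inter> T k' = {}"
  proof (intro ballI impI)
    fix k k' assume k: "k \<in> A'" "k' \<in> A'" "k \<noteq> k'"
    show "T k \<inter> T k' = {}"
    proof (rule ccontr)
      assume "T k \<inter> T k' \<noteq> {}"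
      then obtain P c where "(P,c) \<in> SA A" "{k,m} \<in> P" "{k',m} \<in> P"
        by (auto simp: T_def)
      then have "{k,m} = {k',m}" using blocks_eq by blast
      then show False using k mA' by (auto simp: doubleton_eq_iff)
    qed
  qed
  have finSA: "finite (SA A)" using SA_finite fin by blast
  have finT: "\<And>k. finite (T k)" using finSA by (auto simp: T_def)
  have finS1: "finite S1" using finSA by (auto simp: S1_def)
  have finA': "finite A'" using fin by (simp add: A'_def)
  have S1_img: "S1 = f1 ` (SA A' \<times> {1,2})"
  proof
    show "f1 ` (SA A' \<times> {1,2}) \<subseteq> S1"
      using SA_add1[OF _ mA'] AA by (auto simp: f1_def S1_def)
  next
    show "S1 \<subseteq> f1 ` (SA A' \<times> {1,2})"
    proof
      fix \<sigma> assume s: "\<sigma> \<in> S1"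
      obtain P c where \<sigma>: "\<sigma> = (P,c)" by force
      have PS: "(P,c) \<in> SA A" and mP: "{m} \<in> P" using s \<sigma> by (auto simp: S1_def)
      have r: "(P - {{m}}, \<lambda>x. if x \<in> {m} then undefined else c x) \<in> SA A'"
        using SA_rem[OF PS mP] by (simp add: A'_def)
      have cm: "c m \<in> {1,2}" using PS mA by (auto simp: SA_def)
      have "f1 ((P - {{m}}, \<lambda>x. if x \<in> {m} then undefined else c x), c m) = (P,c)"
        using mP by (auto simp: f1_def)
      then show "\<sigma> \<in> f1 ` (SA A' \<times> {1,2})" using r cm \<sigma> by force
    qed
  qed
  have inj1: "inj_on f1 (SA A' \<times> {1,2})"
  proof (rule inj_onI)
    fix a b assume a: "a \<in> SA A' \<times> {1,2}" and b: "b \<in> SA A' \<times> {1,2}" and e: "f1 a = f1 b"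
    obtain Q d x where a': "a = ((Q,d),x)" by (metis prod.collapse)
    obtain Q' d' x' where b': "b = ((Q',d'),x')" by (metis prod.collapse)
    have Q: "\<Union>Q = A'" "\<Union>Q' = A'" "d \<in> A' \<rightarrow>\<^sub>E {1,2}" "d' \<in> A' \<rightarrow>\<^sub>E {1,2}"
      using a b a' b' by (auto simp: SA_def partition_on_def)
    have e1: "insert {m} Q = insert {m} Q'" and e2: "d(m:=x) = d'(m:=x')"
      using e a' b' by (auto simp: f1_def)
    have "{m} \<notin> Q" "{m} \<notin> Q'" using Q mA' by auto
    then have "Q = Q'" using e1 by (metis insert_ident)
    moreover have "x = x'" using fun_cong[OF e2, of m] by simp
    moreover have "d = d'"
    proof
      fix y show "d y = d' y"
      proof (cases "y = m")
        case True then show ?thesis using Q mA' by (auto simp: PiE_def extensional_def)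
      next
        case False then show ?thesis using fun_cong[OF e2, of y] by simp
      qed
    qed
    ultimately show "a = b" using a' b' by simp
  qed
  have cS1: "card S1 = 2 * card (SA A')"
    using S1_img card_image[OF inj1] card_cartesian_product[of "SA A'" "{1::nat,2}"] by simp
  have cT: "card (T k) = card (SA (A' - {k}))" if kA: "k \<in> A'" for k
  proof -
    have km: "k < m" using kless kA by blast
    have AA2: "A = insert k (insert m (A' - {k}))" using AA kA by auto
    have Timg: "T k = f2 k ` SA (A' - {k})"
    proof
      show "f2 k ` SA (A' - {k}) \<subseteq> T k"
        using SA_add2[OF _ _ _ km, of _ _ "A' - {k}"] AA2 mA' by (auto simp: f2_def T_def)
    next
      show "T k \<subseteq> f2 k ` SA (A' - {k})"
      proof
        fix \<sigma> assume s: "\<sigma> \<in> T k"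
        obtain P c where \<sigma>: "\<sigma> = (P,c)" by force
        have PS: "(P,c) \<in> SA A" and mP: "{k,m} \<in> P" using s \<sigma> by (auto simp: T_def)
        have r: "(P - {{k,m}}, \<lambda>x. if x \<in> {k,m} then undefined else c x) \<in> SA (A' - {k})"
          using SA_rem[OF PS mP] by (simp add: A'_def Diff_insert2[symmetric] insert_commute)
        have ck: "c k \<in> {1,2}" "c m \<in> {1,2}" using PS mA kA by (auto simp: SA_def A'_def)
        have n1: "c k \<noteq> c m" using PS mP km by (auto simp: SA_def contains_11_11_def)
        have n2: "\<not> (c k = 1 \<and> c m = 2)" using PS mP km by (auto simp: SA_def contains_11_12_def)
        have cc: "c k = 2" "c m = 1" using ck n1 n2 by auto
        have "f2 k (P - {{k,m}}, \<lambda>x. if x \<in> {k,m} then undefined else c x) = (P,c)"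
          using mP cc by (auto simp: f2_def)
        then show "\<sigma> \<in> f2 k ` SA (A' - {k})" using r \<sigma> by force
      qed
    qed
    have inj2: "inj_on (f2 k) (SA (A' - {k}))"
    proof (rule inj_onI)
      fix a b assume a: "a \<in> SA (A' - {k})" and b: "b \<in> SA (A' - {k})" and e: "f2 k a = f2 k b"
      obtain Q d where a': "a = (Q,d)" by force
      obtain Q' d' where b': "b = (Q',d')" by force
      have Q: "\<Union>Q = A' - {k}" "\<Union>Q' = A' - {k}" "d \<in> A' - {k} \<rightarrow>\<^sub>E {1,2}" "d' \<in> A' - {k} \<rightarrow>\<^sub>E {1,2}"
        using a b a' b' by (auto simp: SA_def partition_on_def)
      have e1: "insert {k,m} Q = insert {k,m} Q'" and e2: "d(k:=2, m:=1) = d'(k:=2, m:=1)"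
        using e a' b' by (auto simp: f2_def)
      have "{k,m} \<notin> Q" "{k,m} \<notin> Q'" using Q mA' by auto
      then have "Q = Q'" using e1 by (metis insert_ident)
      moreover have "d = d'"
      proof
        fix y show "d y = d' y"
        proof (cases "y = m \<or> y = k")
          case True then show ?thesis using Q mA' by (auto simp: PiE_def extensional_def)
        next
          case False then show ?thesis using fun_cong[OF e2, of y] by simp
        qed
      qed
      ultimately show "a = b" using a' b' by simp
    qed
    show ?thesis using Timg card_image[OF inj2] by simp
  qed
  have "card (SA A) = card S1 + card (\<Union>k\<in>A'. T k)"
    using cover d1 finS1 finT finA' by (simp add: card_Un_disjoint)
  also have "card (\<Union>k\<in>A'. T k) = (\<Sum>k\<in>A'. card (T k))"
    using card_UN_disjoint[OF finA'] finT d2 by blast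
  also have "\<dots> = (\<Sum>k\<in>A'. card (SA (A' - {k})))" using cT by simp
  finally show ?thesis using cS1 by (simp add: A'_def)
qed

fun g :: "nat \<Rightarrow> nat" where
  "g 0 = 1" | "g (Suc 0) = 2" | "g (Suc (Suc n)) = 2 * g (Suc n) + Suc n * g n"

lemma SA_empty: "SA {} = {({}, \<lambda>_. undefined)}"
  by (auto simp: SA_def partition_on_empty contains_11_11_def contains_11_12_def)

lemma SA_card: "finite A \<Longrightarrow> card (SA A) = g (card A)"
proof (induction "card A" arbitrary: A rule: less_induct)
  case less
  show ?case
  proof (cases "A = {}")
    case True then show ?thesis by (simp add: SA_empty)
  next
    case False
    define m where "m = Max A"
    have mA: "m \<in> A" using less.prems False by (simp add: m_def)
    have c1: "card (A - {m}) = card A - 1" using mA less.prems by simp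
    have cpos: "card A > 0" using less.prems False by (simp add: card_gt_0_iff)
    have IH1: "card (SA (A - {m})) = g (card A - 1)"
      using less.hyps[of "A - {m}"] c1 cpos less.prems by simp
    have IH2: "card (SA (A - {m} - {k})) = g (card A - 2)" if k: "k \<in> A - {m}" for k
    proof -
      have "card (A - {m} - {k}) = card A - 2" using k c1 less.prems by simp
      then show ?thesis using less.hyps[of "A - {m} - {k}"] cpos less.prems by simp
    qed
    have "card (SA A) = 2 * g (card A - 1) + (card A - 1) * g (card A - 2)"
      using decomp[OF less.prems False] IH1 IH2 c1 by (simp add: m_def)
    moreover obtain j where j: "card A = Suc j" using cpos gr0_implies_Suc by blast
    ultimately show ?thesis by (cases j) auto
  qed
qed

theorem mainTheorem4:
  fixes n :: nat
  assumes "n \<ge> 3"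
  shows "avoiding_count n = 2 * avoiding_count (n - 1) + (n - 1) * avoiding_count (n - 2)"
proof -
  have ac: "avoiding_count k = g k" for k
  proof -
    have "avoiding_count k = card (SA {1..k})"
      unfolding avoiding_count_def SA_def colored_partitions_def
      by (rule arg_cong[where f=card]) auto
    then show ?thesis using SA_card[of "{1..k}"] by simp
  qed
  obtain j where "n = Suc (Suc j)" using assms by (metis add_2_eq_Suc le_Suc_ex numeral_3_eq_3 le_add2 le_trans nat_le_iff_add)
  then show ?thesis by (simp add: ac)
qed

end
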